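(* Let $(x_n)$ be a level-block sequence in $JT$ which is equivalent to the unit vector basis of $\ell_2$. Then the closed linear span $[x_n]$ is complemented in $JT$.
   Context: Let $\mathcal T$ be the dyadic tree, with nodes enumerated by $\mathbb N$ so that the tree order $\preceq$ satisfies $n\preceq m\Rightarrow n\le m$; $|t|$ is the height of node $t$. A segment is a subset $s\subseteq\mathcal T$ totally ordered by $\preceq$ and convex. For $x\in c_0(\mathcal T)$, $\|x\|_{JT}=\sup\big(\sum_{j=1}^k(\sum_{t\in s_j}x(t))^2\big)^{1/2}$ over all finite families of pairwise disjoint finite segments; $JT=\{x\in c_0:\|x\|_{JT}<\infty\}$. For $0\ne x\in JT$, $\operatorname{supp}x=\{t:x(t)\ne0\}$, $l(x)=\min\{|t|:t\in\operatorname{supp}x\}$, $u(x)=\sup\{|t|:t\in\operatorname{supp}x\}$. A sequence $(x_k)$ of nonzero vectors is level-block if $u(x_k)<l(x_{k+1})$ for all $k$. *)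

theory Defs
  imports "HOL-Analysis.Analysis" "HOL-Library.Extended_Nat"
begin

text \<open>Dyadic tree on nat: root 0, children of n are 2n+1 and 2n+2.
  This enumeration satisfies  n \<preceq> m \<Longrightarrow> n \<le> m.\<close>

definition tparent :: "nat \<Rightarrow> nat" where
  "tparent m = (m - 1) div 2"

definition tle :: "nat \<Rightarrow> nat \<Rightarrow> bool" where
  "tle n m \<longleftrightarrow> (\<exists>k. (tparent ^^ k) m = n)"

fun height :: "nat \<Rightarrow> nat" where
  "height n = (if n = 0 then 0 else Suc (height ((n - 1) div 2)))"

definition segment :: "nat set \<Rightarrow> bool" where
  "segment S \<longleftrightarrow> (\<forall>a\<in>S. \<forall>b\<in>S. tle a b \<or> tle b a)
                  \<and> (\<forall>a\<in>S. \<forall>b\<in>S. \<forall>c. tle a c \<and> tle c b \<longrightarrow> c \<in> S)"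

definition admissible_family :: "nat set set \<Rightarrow> bool" where
  "admissible_family F \<longleftrightarrow> finite F \<and> (\<forall>s\<in>F. finite s \<and> segment s)
     \<and> (\<forall>s\<in>F. \<forall>s'\<in>F. s \<noteq> s' \<longrightarrow> s \<inter> s' = {})"

definition jt_sums :: "(nat \<Rightarrow> real) \<Rightarrow> real set" where
  "jt_sums x = {\<Sum>s\<in>F. (\<Sum>t\<in>s. x t)\<^sup>2 | F. admissible_family F}"

definition JT :: "(nat \<Rightarrow> real) set" where
  "JT = {x. x \<longlonglongrightarrow> 0 \<and> bdd_above (jt_sums x)}"

definition jt_norm :: "(nat \<Rightarrow> real) \<Rightarrow> real" where
  "jt_norm x = sqrt (Sup (jt_sums x))"

definition supp :: "(nat \<Rightarrow> real) \<Rightarrow> nat set" where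
  "supp x = {t. x t \<noteq> 0}"

definition lvl :: "(nat \<Rightarrow> real) \<Rightarrow> nat" where
  "lvl x = (LEAST h. \<exists>t\<in>supp x. height t = h)"

definition uvl :: "(nat \<Rightarrow> real) \<Rightarrow> enat" where
  "uvl x = (SUP t\<in>supp x. enat (height t))"

definition level_block :: "(nat \<Rightarrow> nat \<Rightarrow> real) \<Rightarrow> bool" where
  "level_block xs \<longleftrightarrow> (\<forall>k. supp (xs k) \<noteq> {}) \<and> (\<forall>k. uvl (xs k) < enat (lvl (xs (Suc k))))"

definition equiv_l2 :: "(nat \<Rightarrow> nat \<Rightarrow> real) \<Rightarrow> bool" where
  "equiv_l2 xs \<longleftrightarrow> (\<exists>c C. 0 < c \<and> 0 < C \<and> (\<forall>n (a::nat \<Rightarrow> real).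
      c * sqrt (\<Sum>k<n. (a k)\<^sup>2) \<le> jt_norm (\<lambda>t. \<Sum>k<n. a k * xs k t) \<and>
      jt_norm (\<lambda>t. \<Sum>k<n. a k * xs k t) \<le> C * sqrt (\<Sum>k<n. (a k)\<^sup>2)))"

definition lin_span :: "(nat \<Rightarrow> nat \<Rightarrow> real) \<Rightarrow> (nat \<Rightarrow> real) set" where
  "lin_span xs = {(\<lambda>t. \<Sum>k<n. a k * xs k t) | n a. True}"

definition closed_span :: "(nat \<Rightarrow> nat \<Rightarrow> real) \<Rightarrow> (nat \<Rightarrow> real) set" where
  "closed_span xs = {y \<in> JT. \<forall>e>0. \<exists>z\<in>lin_span xs. jt_norm (\<lambda>t. y t - z t) < e}"

definition complemented_in_JT :: "(nat \<Rightarrow> real) set \<Rightarrow> bool" where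
  "complemented_in_JT Y \<longleftrightarrow> (\<exists>P M.
      (\<forall>x\<in>JT. P x \<in> Y) \<and> (\<forall>y\<in>Y. P y = y)
    \<and> (\<forall>x\<in>JT. \<forall>y\<in>JT. \<forall>a b::real. P (\<lambda>t. a * x t + b * y t) = (\<lambda>t. a * P x t + b * P y t))
    \<and> (\<forall>x\<in>JT. jt_norm (P x) \<le> M * jt_norm x))"

end

theory Submission
  imports Defs
begin


lemma height_0: "height 0 = 0"
  by (subst height.simps) simp

lemma height_eq: "m \<noteq> 0 \<Longrightarrow> height m = Suc (height (tparent m))"
  by (subst height.simps) (simp add: tparent_def)

declare height.simps [simp del]

lemma tparent_le: "tparent m \<le> m"
  unfolding tparent_def by simp

lemma height_tparent: "height (tparent m) \<le> height m"
  by (cases "m = 0") (simp_all add: height_eq tparent_def)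

lemma funpow_tparent: "(tparent ^^ k) m \<le> m \<and> height ((tparent ^^ k) m) \<le> height m"
proof (induction k)
  case 0 then show ?case by simp
next
  case (Suc k)
  then show ?case using tparent_le[of "(tparent ^^ k) m"] height_tparent[of "(tparent ^^ k) m"] by auto
qed

lemma tle_le: "tle a b \<Longrightarrow> a \<le> b"
  unfolding tle_def using funpow_tparent by blast

lemma tle_height: "tle a b \<Longrightarrow> height a \<le> height b"
  unfolding tle_def using funpow_tparent by blast

lemma height_le: "height n \<le> n"
proof (induction n rule: less_induct)
  case (less n)
  show ?case
  proof (cases "n = 0")
    case True then show ?thesis by (simp add: height_0)
  next
    case False
    have "tparent n < n" using False unfolding tparent_def by simp
    then show ?thesis using less[of "tparent n"] False height_eq by simp
  qed
qed

lemma segment_band: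
  assumes seg: "segment s"
  shows "segment (s \<inter> {t. a \<le> height t \<and> height t < b})"
proof -
  let ?B = "{t. a \<le> height t \<and> height t < b}"
  have tot: "\<forall>u\<in>s. \<forall>v\<in>s. tle u v \<or> tle v u"
    using seg unfolding segment_def by (rule conjunct1)
  have cvx: "\<forall>u\<in>s. \<forall>v\<in>s. \<forall>c. tle u c \<and> tle c v \<longrightarrow> c \<in> s"
    using seg unfolding segment_def by (rule conjunct2)
  have 1: "\<forall>u\<in>s \<inter> ?B. \<forall>v\<in>s \<inter> ?B. tle u v \<or> tle v u"
    using tot by simp
  have 2: "\<forall>u\<in>s \<inter> ?B. \<forall>v\<in>s \<inter> ?B. \<forall>c. tle u c \<and> tle c v \<longrightarrow> c \<in> s \<inter> ?B"
  proof (intro ballI allI impI)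
    fix u v c assume u: "u \<in> s \<inter> ?B" and v: "v \<in> s \<inter> ?B" and c: "tle u c \<and> tle c v"
    have "c \<in> s" using cvx u v c by blast
    moreover have "height u \<le> height c" using c tle_height by simp
    moreover have "height c \<le> height v" using c tle_height by simp
    ultimately show "c \<in> s \<inter> ?B" using u v by simp
  qed
  show ?thesis unfolding segment_def using 1 2 by (rule conjI)
qed

lemma admissible_single: "admissible_family {{t}}"
  unfolding admissible_family_def segment_def
  using tle_le by (auto simp: tle_def intro: exI[of _ 0] le_antisym)

lemma admissible_empty: "admissible_family {}"
  unfolding admissible_family_def by simp



definition sig :: "nat set \<Rightarrow> (nat \<Rightarrow> real) \<Rightarrow> real" where
  "sig s x = (\<Sum>t\<in>s. x t)"

definition ssq :: "nat set set \<Rightarrow> (nat \<Rightarrow> real) \<Rightarrow> real" where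
  "ssq F x = (\<Sum>s\<in>F. (sig s x)\<^sup>2)"

abbreviation bdd :: "(nat \<Rightarrow> real) \<Rightarrow> bool" where
  "bdd x \<equiv> bdd_above (jt_sums x)"

lemma jt_sums_mem: "admissible_family F \<Longrightarrow> ssq F x \<in> jt_sums x"
  unfolding jt_sums_def ssq_def sig_def by blast

lemma jt_sums_ne: "jt_sums x \<noteq> {}"
  using jt_sums_mem[OF admissible_empty] by blast

lemma ssq_le_S: "admissible_family F \<Longrightarrow> bdd x \<Longrightarrow> ssq F x \<le> Sup (jt_sums x)"
  by (rule cSup_upper[OF jt_sums_mem])

lemma ssq_nonneg: "0 \<le> ssq F x"
  unfolding ssq_def by (simp add: sum_nonneg)

lemma S_nonneg: "bdd x \<Longrightarrow> 0 \<le> Sup (jt_sums x)"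
  using ssq_le_S[OF admissible_empty, of x] by (simp add: ssq_def)

lemma jt_norm_sq: "bdd x \<Longrightarrow> (jt_norm x)\<^sup>2 = Sup (jt_sums x)"
  unfolding jt_norm_def using S_nonneg by simp

lemma jt_norm_nonneg: "bdd x \<Longrightarrow> 0 \<le> jt_norm x"
  unfolding jt_norm_def using S_nonneg by simp

lemma jt_sums_cases: "v \<in> jt_sums x \<Longrightarrow> \<exists>F. admissible_family F \<and> v = ssq F x"
  unfolding jt_sums_def ssq_def sig_def by blast

lemma bound_lemma:
  assumes "\<And>F. admissible_family F \<Longrightarrow> ssq F x \<le> B"
  shows "bdd x \<and> Sup (jt_sums x) \<le> B"
proof
  show "bdd x" unfolding bdd_above_def using assms jt_sums_cases by blast
  show "Sup (jt_sums x) \<le> B"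
    by (rule cSup_least[OF jt_sums_ne]) (use assms jt_sums_cases in blast)
qed

lemma bound_norm:
  assumes "\<And>F. admissible_family F \<Longrightarrow> ssq F x \<le> B"
  shows "bdd x \<and> jt_norm x \<le> sqrt B"
  using bound_lemma[OF assms] unfolding jt_norm_def by simp

lemma ssq_single: "ssq {{t}} x = (x t)\<^sup>2"
  unfolding ssq_def sig_def by simp

lemma abs_le_bound:
  assumes "\<And>F. admissible_family F \<Longrightarrow> ssq F x \<le> B"
  shows "\<bar>x t\<bar> \<le> sqrt B"
  using assms[OF admissible_single[of t]] unfolding ssq_single
  by (metis real_sqrt_abs real_sqrt_le_mono)

lemma abs_le_norm: "bdd x \<Longrightarrow> \<bar>x t\<bar> \<le> jt_norm x"
  using abs_le_bound[of x "Sup (jt_sums x)" t] ssq_le_S unfolding jt_norm_def by blast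

lemma L2_sig_le: "admissible_family F \<Longrightarrow> bdd x \<Longrightarrow> L2_set (\<lambda>s. sig s x) F \<le> jt_norm x"
  unfolding L2_set_def jt_norm_def using ssq_le_S unfolding ssq_def
  using real_sqrt_le_mono by blast

lemma sig_add: "sig s (\<lambda>t. x t + y t) = sig s x + sig s y"
  unfolding sig_def by (simp add: sum.distrib)

lemma sig_mult: "sig s (\<lambda>t. a * x t) = a * sig s x"
  unfolding sig_def by (simp add: sum_distrib_left)

lemma sig_diff: "sig s (\<lambda>t. x t - y t) = sig s x - sig s y"
  unfolding sig_def by (simp add: sum_subtractf)

lemma sig_zero: "sig s (\<lambda>t. 0) = 0"
  unfolding sig_def by simp

lemma L2_scale: "L2_set (\<lambda>s. a * f s) F = \<bar>a\<bar> * L2_set f F"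
proof -
  have "L2_set (\<lambda>s. a * f s) F = L2_set (\<lambda>s. \<bar>a\<bar> * f s) F"
    unfolding L2_set_def by (simp add: power_mult_distrib)
  then show ?thesis using L2_set_right_distrib[of "\<bar>a\<bar>" f F] by simp
qed

lemma phi_lin:
  fixes N :: nat
  assumes F: "admissible_family F" and b: "\<forall>k. bdd (y k)"
  shows "L2_set (\<lambda>s. sig s (\<lambda>t. \<Sum>k<N. a k * y k t)) F \<le> (\<Sum>k<N. \<bar>a k\<bar> * jt_norm (y k))"
proof (induction N)
  case 0
  then show ?case by (simp add: sig_zero L2_set_0')
next
  case (Suc N)
  have e: "sig s (\<lambda>t. \<Sum>k<Suc N. a k * y k t) = sig s (\<lambda>t. \<Sum>k<N. a k * y k t) + a N * sig s (y N)" for s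
    using sig_add[of s "\<lambda>t. \<Sum>k<N. a k * y k t" "\<lambda>t. a N * y N t"] sig_mult[of s "a N" "y N"]
    by simp
  have "L2_set (\<lambda>s. sig s (\<lambda>t. \<Sum>k<Suc N. a k * y k t)) F
     \<le> L2_set (\<lambda>s. sig s (\<lambda>t. \<Sum>k<N. a k * y k t)) F + L2_set (\<lambda>s. a N * sig s (y N)) F"
    unfolding e by (rule L2_set_triangle_ineq)
  also have "\<dots> \<le> (\<Sum>k<N. \<bar>a k\<bar> * jt_norm (y k)) + \<bar>a N\<bar> * jt_norm (y N)"
    using Suc L2_sig_le[OF F, of "y N"] b unfolding L2_scale
    by (intro add_mono mult_left_mono) auto
  finally show ?case by simp
qed

lemma ssq_L2: "ssq F x = (L2_set (\<lambda>s. sig s x) F)\<^sup>2"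
  unfolding ssq_def L2_set_def by (simp add: sum_nonneg)

lemma bdd_lin: "\<forall>k. bdd (y k) \<Longrightarrow> bdd (\<lambda>t. \<Sum>k<(N::nat). a k * y k t)"
  using bound_lemma[of "\<lambda>t. \<Sum>k<N. a k * y k t" "(\<Sum>k<N. \<bar>a k\<bar> * jt_norm (y k))\<^sup>2"]
    phi_lin unfolding ssq_L2
  by (meson L2_set_nonneg power_mono)

lemma bdd_diff:
  assumes "bdd x" "bdd y" shows "bdd (\<lambda>t. x t - y t)"
proof -
  have h: "ssq F (\<lambda>t. x t - y t) \<le> (jt_norm x + jt_norm y)\<^sup>2" if F: "admissible_family F" for F
  proof -
    have "L2_set (\<lambda>s. sig s (\<lambda>t. x t - y t)) F \<le> L2_set (\<lambda>s. sig s x) F + L2_set (\<lambda>s. (-1) * sig s y) F"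
      unfolding sig_diff using L2_set_triangle_ineq[of "\<lambda>s. sig s x" "\<lambda>s. (-1) * sig s y" F] by simp
    also have "\<dots> \<le> jt_norm x + jt_norm y"
      unfolding L2_scale using L2_sig_le[OF F] assms by (intro add_mono) auto
    finally show ?thesis unfolding ssq_L2 by (meson L2_set_nonneg power_mono)
  qed
  have "bdd (\<lambda>t. x t - y t) \<and> Sup (jt_sums (\<lambda>t. x t - y t)) \<le> (jt_norm x + jt_norm y)\<^sup>2"
    by (rule bound_lemma) (erule h)
  then show ?thesis by (rule conjunct1)
qed



definition band :: "(nat \<Rightarrow> nat \<Rightarrow> real) \<Rightarrow> nat \<Rightarrow> nat set" where
  "band xs k = {t. lvl (xs k) \<le> height t \<and> height t < lvl (xs (Suc k))}"

lemma lvl_le: "t \<in> supp x \<Longrightarrow> lvl x \<le> height t"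
  unfolding lvl_def by (rule Least_le) blast

lemma uvl_ge: "t \<in> supp x \<Longrightarrow> enat (height t) \<le> uvl x"
  unfolding uvl_def by (rule SUP_upper)

lemma LB1: assumes "level_block xs" "xs k t \<noteq> 0" shows "t \<in> band xs k"
proof -
  have t: "t \<in> supp (xs k)" using assms(2) unfolding supp_def by simp
  have "enat (height t) < enat (lvl (xs (Suc k)))"
    using uvl_ge[OF t] assms(1) unfolding level_block_def by (meson le_less_trans)
  then show ?thesis using lvl_le[OF t] unfolding band_def by simp
qed

lemma LB2: assumes "level_block xs" shows "lvl (xs k) < lvl (xs (Suc k))"
proof -
  obtain t where t: "t \<in> supp (xs k)" using assms unfolding level_block_def by blast
  then have "xs k t \<noteq> 0" unfolding supp_def by simp
  then show ?thesis using LB1[OF assms] lvl_le[OF t] unfolding band_def by fastforce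
qed

lemma LB_mono: assumes "level_block xs" "j < k" shows "lvl (xs (Suc j)) \<le> lvl (xs k)"
proof -
  have "strict_mono (\<lambda>k. lvl (xs k))" using LB2[OF assms(1)] by (simp add: strict_mono_Suc_iff)
  then show ?thesis using assms(2) by (metis Suc_leI strict_mono_less_eq)
qed

lemma LB_ge: assumes "level_block xs" shows "k \<le> lvl (xs k)"
proof -
  have "strict_mono (\<lambda>k. lvl (xs k))" using LB2[OF assms(1)] by (simp add: strict_mono_Suc_iff)
  then show ?thesis by (rule strict_mono_imp_increasing)
qed

lemma band_disj: assumes "level_block xs" "j \<noteq> k" shows "band xs j \<inter> band xs k = {}"
proof -
  have "band xs j \<inter> band xs k = {}" if "j < k" for j k
    using LB_mono[OF assms(1) that] unfolding band_def by (auto simp: disjoint_iff)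
  then show ?thesis using assms(2) by (metis inf_commute linorder_neqE_nat)
qed

lemma LB3: assumes "level_block xs" "t \<in> band xs j" "k \<noteq> j" shows "xs k t = 0"
  using LB1[OF assms(1), of k t] band_disj[OF assms(1) assms(3)] assms(2) by blast

lemma LB4: assumes "level_block xs" "xs k t \<noteq> 0" shows "k \<le> t"
proof -
  have "k \<le> lvl (xs k)" by (rule LB_ge[OF assms(1)])
  also have "\<dots> \<le> height t" using LB1[OF assms] unfolding band_def by simp
  also have "\<dots> \<le> t" by (rule height_le)
  finally show ?thesis .
qed

lemma trim:
  assumes F: "admissible_family F"
    and hB: "\<And>s. segment s \<Longrightarrow> segment (s \<inter> B)"
  shows "admissible_family ((\<lambda>s. s \<inter> B) ` F - {{}}) \<and> (\<forall>s\<in>(\<lambda>s. s \<inter> B) ` F - {{}}. s \<noteq> {} \<and> s \<subseteq> B)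
     \<and> ssq ((\<lambda>s. s \<inter> B) ` F - {{}}) x = (\<Sum>s\<in>F. (sig (s \<inter> B) x)\<^sup>2)"
proof -
  have fin: "finite F" using F unfolding admissible_family_def by simp
  have P1: "admissible_family ((\<lambda>s. s \<inter> B) ` F - {{}})"
    unfolding admissible_family_def
  proof (intro conjI ballI impI)
    show "finite ((\<lambda>s. s \<inter> B) ` F - {{}})" using fin by simp
  next
    fix s assume "s \<in> (\<lambda>s. s \<inter> B) ` F - {{}}"
    then obtain s0 where s0: "s0 \<in> F" "s = s0 \<inter> B" by blast
    have "finite s0 \<and> segment s0" using F s0(1) unfolding admissible_family_def by blast
    then have fs: "finite s \<and> segment s" unfolding s0(2) using hB[of s0] by blast
    then show "finite s" by blast
    from fs show "segment s" by blast
  next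
    fix s s' assume a: "s \<in> (\<lambda>s. s \<inter> B) ` F - {{}}" "s' \<in> (\<lambda>s. s \<inter> B) ` F - {{}}" "s \<noteq> s'"
    then obtain s0 s0' where o: "s0 \<in> F" "s = s0 \<inter> B" "s0' \<in> F" "s' = s0' \<inter> B" by blast
    then have "s0 \<noteq> s0'" using a(3) by blast
    then have "s0 \<inter> s0' = {}" using F o(1,3) unfolding admissible_family_def by blast
    then show "s \<inter> s' = {}" using o(2,4) by blast
  qed
  have P2: "\<forall>s\<in>(\<lambda>s. s \<inter> B) ` F - {{}}. s \<noteq> {} \<and> s \<subseteq> B" by blast
  have "ssq ((\<lambda>s. s \<inter> B) ` F - {{}}) x = (\<Sum>s\<in>(\<lambda>s. s \<inter> B) ` F. (sig s x)\<^sup>2)"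
    unfolding ssq_def using fin sum_diff1[of "(\<lambda>s. s \<inter> B) ` F" "\<lambda>s. (sig s x)\<^sup>2" "{}"]
    by (simp add: sig_def)
  also have "\<dots> = (\<Sum>s\<in>F. (sig (s \<inter> B) x)\<^sup>2)"
  proof (subst sum.reindex_nontrivial[OF fin])
    fix s s' assume ss: "s \<in> F" "s' \<in> F" "s \<noteq> s'" and eq: "s \<inter> B = s' \<inter> B"
    have disj: "s \<inter> s' = {}" using F ss unfolding admissible_family_def by blast
    have "s \<inter> B = {}"
    proof (rule equals0I)
      fix u assume u: "u \<in> s \<inter> B"
      then have "u \<in> s' \<inter> B" using eq by simp
      then show False using u disj by blast
    qed
    then show "(sig (s \<inter> B) x)\<^sup>2 = 0" by (simp add: sig_def)
  qed simp
  finally have P3: "ssq ((\<lambda>s. s \<inter> B) ` F - {{}}) x = (\<Sum>s\<in>F. (sig (s \<inter> B) x)\<^sup>2)" .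
  show ?thesis by (rule conjI[OF P1 conjI[OF P2 P3]])
qed

lemma segment_bandxs: "segment s \<Longrightarrow> segment (s \<inter> band xs k)"
  unfolding band_def by (rule segment_band)

lemma sig_restrict: "finite s \<Longrightarrow> (\<forall>t. x t \<noteq> 0 \<longrightarrow> t \<in> B) \<Longrightarrow> sig (s \<inter> B) x = sig s x"
  unfolding sig_def by (rule sum.mono_neutral_left) auto

lemma union_fam:
  assumes lb: "level_block xs"
    and G: "\<And>k. admissible_family (G k) \<and> (\<forall>s\<in>G k. s \<noteq> {} \<and> s \<subseteq> band xs k)"
  shows "admissible_family (\<Union>k<N. G k) \<and> ssq (\<Union>k<N. G k) x = (\<Sum>k<N. ssq (G k) x)"
proof -
  have Gfin: "finite (G k)" for k using G[of k] unfolding admissible_family_def by (elim conjE)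
  have Gseg: "finite s \<and> segment s" if "s \<in> G k" for s k
  proof -
    have "\<forall>s\<in>G k. finite s \<and> segment s" using G[of k] unfolding admissible_family_def by (elim conjE)
    then show ?thesis using that by (rule bspec)
  qed
  have Gdisj: "s \<inter> s' = {}" if "s \<in> G k" "s' \<in> G k" "s \<noteq> s'" for s s' k
  proof -
    have "\<forall>s\<in>G k. \<forall>s'\<in>G k. s \<noteq> s' \<longrightarrow> s \<inter> s' = {}" using G[of k] unfolding admissible_family_def by (elim conjE)
    then show ?thesis using that by simp
  qed
  have Gsub: "s \<noteq> {} \<and> s \<subseteq> band xs k" if "s \<in> G k" for s k
  proof -
    have "\<forall>s\<in>G k. s \<noteq> {} \<and> s \<subseteq> band xs k" using G[of k] by (elim conjE)
    then show ?thesis using that by (rule bspec)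
  qed
  have d: "s \<inter> s' = {}" if "s \<in> G j" "s' \<in> G k" "j \<noteq> k" for s s' j k
  proof -
    have "s \<subseteq> band xs j" using Gsub[OF that(1)] by (elim conjE)
    moreover have "s' \<subseteq> band xs k" using Gsub[OF that(2)] by (elim conjE)
    ultimately have "s \<inter> s' \<subseteq> band xs j \<inter> band xs k" by (rule Int_mono)
    then show ?thesis using band_disj[OF lb that(3)] by simp
  qed
  have A1: "finite (\<Union>k<N. G k)" using Gfin by simp
  have A2: "\<forall>s\<in>(\<Union>k<N. G k). finite s \<and> segment s"
  proof
    fix s assume "s \<in> (\<Union>k<N. G k)"
    then obtain k where "s \<in> G k" by (rule UN_E)
    then show "finite s \<and> segment s" by (rule Gseg)
  qed
  have A3: "\<forall>s\<in>(\<Union>k<N. G k). \<forall>s'\<in>(\<Union>k<N. G k). s \<noteq> s' \<longrightarrow> s \<inter> s' = {}"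
  proof (intro ballI impI)
    fix s s' assume a: "s \<in> (\<Union>k<N. G k)" "s' \<in> (\<Union>k<N. G k)" "s \<noteq> s'"
    obtain j where j: "s \<in> G j" using a(1) by (rule UN_E)
    obtain k where k: "s' \<in> G k" using a(2) by (rule UN_E)
    show "s \<inter> s' = {}"
    proof (cases "j = k")
      case True
      then show ?thesis using Gdisj[of s k s'] j k a(3) by simp
    next
      case False
      then show ?thesis using d[OF j k] by simp
    qed
  qed
  have adm: "admissible_family (\<Union>k<N. G k)"
    unfolding admissible_family_def using A1 A2 A3 by (intro conjI)
  have fin: "\<forall>i\<in>{..<N}. finite (G i)" using Gfin by simp
  have disj: "\<forall>i\<in>{..<N}. \<forall>j\<in>{..<N}. i \<noteq> j \<longrightarrow> G i \<inter> G j = {}"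
  proof (intro ballI impI)
    fix i j :: nat assume ij: "i \<noteq> j"
    show "G i \<inter> G j = {}"
    proof (rule equals0I)
      fix s assume "s \<in> G i \<inter> G j"
      then have s: "s \<in> G i" "s \<in> G j" by simp_all
      have "s \<noteq> {}" using Gsub[OF s(1)] by (elim conjE)
      moreover have "s \<inter> s = {}" by (rule d[OF s ij])
      ultimately show False by simp
    qed
  qed
  have "ssq (\<Union>k<N. G k) x = (\<Sum>k<N. ssq (G k) x)"
    unfolding ssq_def by (rule sum.UNION_disjoint[OF finite_lessThan fin disj])
  with adm show ?thesis by (rule conjI)
qed



lemma ssq_cong: "(\<And>s t. s \<in> F \<Longrightarrow> t \<in> s \<Longrightarrow> v t = w t) \<Longrightarrow> ssq F v = ssq F w"
  unfolding ssq_def sig_def by (intro sum.cong refl arg_cong[where f="\<lambda>u. u\<^sup>2"]) auto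

lemma sum_tail_if:
  fixes f :: "nat \<Rightarrow> real"
  shows "n \<le> N \<Longrightarrow> (\<Sum>k<N. f k) - (\<Sum>k<n. f k) = (\<Sum>k<N. if n \<le> k then f k else 0)"
proof (induction N)
  case 0 then show ?case by simp
next
  case (Suc N)
  show ?case
  proof (cases "n \<le> N")
    case True then show ?thesis using Suc by simp
  next
    case False
    then have "n = Suc N" using Suc.prems by simp
    then show ?thesis by simp
  qed
qed

lemma fam_bounded:
  assumes "admissible_family F" shows "\<exists>N0. \<forall>s\<in>F. \<forall>t\<in>s. t < N0"
proof -
  have "finite (\<Union>F)" using assms unfolding admissible_family_def by auto
  then obtain N0 where "\<Union>F \<subseteq> {..<N0}" using finite_nat_bounded by blast
  then show ?thesis by blast
qed

theorem mainTheorem9: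
  fixes xs :: "nat \<Rightarrow> nat \<Rightarrow> real"
  assumes "\<forall>k. xs k \<in> JT"
    and "level_block xs"
    and "equiv_l2 xs"
  shows "complemented_in_JT (closed_span xs)"
proof -
  from assms(3) obtain c C where c0: "0 < c" and C0: "0 < C" and cC: "\<And>n a.
      c * sqrt (\<Sum>k<n. (a k)\<^sup>2) \<le> jt_norm (\<lambda>t. \<Sum>k<n. a k * xs k t) \<and>
      jt_norm (\<lambda>t. \<Sum>k<n. a k * xs k t) \<le> C * sqrt (\<Sum>k<n. (a k)\<^sup>2)"
    unfolding equiv_l2_def by blast
  have lb: "level_block xs" by (rule assms(2))
  have xb: "\<forall>k. bdd (xs k)" using assms(1) unfolding JT_def by auto
  have x0: "\<And>k. xs k \<longlonglongrightarrow> 0" using assms(1) unfolding JT_def by auto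

  have UP: "ssq F (\<lambda>t. \<Sum>k<N. a k * xs k t) \<le> C\<^sup>2 * (\<Sum>k<N. (a k)\<^sup>2)"
    if F: "admissible_family F" for F N a
  proof -
    let ?z = "\<lambda>t. \<Sum>k<N. a k * xs k t"
    have b: "bdd ?z" by (rule bdd_lin[OF xb])
    have "ssq F ?z \<le> (jt_norm ?z)\<^sup>2" using ssq_le_S[OF F b] jt_norm_sq[OF b] by simp
    also have "\<dots> \<le> (C * sqrt (\<Sum>k<N. (a k)\<^sup>2))\<^sup>2"
      using cC[where n=N and a=a] jt_norm_nonneg[OF b] by (intro power_mono) auto
    also have "\<dots> = C\<^sup>2 * (\<Sum>k<N. (a k)\<^sup>2)" by (simp add: power_mult_distrib sum_nonneg)
    finally show ?thesis .
  qed

  have normge: "c\<^sup>2 / 2 < Sup (jt_sums (xs k))" for k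
  proof -
    let ?a = "\<lambda>j. if j = k then (1::real) else 0"
    have e1: "(\<lambda>t. \<Sum>j<Suc k. ?a j * xs j t) = xs k"
    proof
      fix t
      have "(\<Sum>j<Suc k. ?a j * xs j t) = (\<Sum>j<Suc k. if j = k then xs k t else 0)"
        by (rule sum.cong) auto
      then show "(\<Sum>j<Suc k. ?a j * xs j t) = xs k t" by simp
    qed
    have "(\<Sum>j<Suc k. (?a j)\<^sup>2) = (\<Sum>j<Suc k. if j = k then 1 else 0)"
      by (rule sum.cong) auto
    then have e2: "sqrt (\<Sum>j<Suc k. (?a j)\<^sup>2) = 1" by simp
    have "c \<le> jt_norm (xs k)" using cC[where n="Suc k" and a="?a"] unfolding e1 e2 by simp
    then have "c\<^sup>2 \<le> (jt_norm (xs k))\<^sup>2" using c0 by (intro power_mono) auto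
    then have "c\<^sup>2 \<le> Sup (jt_sums (xs k))" using jt_norm_sq xb by simp
    moreover have "0 < c\<^sup>2" using c0 by simp
    ultimately show ?thesis by linarith
  qed

  have Gex: "\<exists>G. admissible_family G \<and> (\<forall>s\<in>G. s \<noteq> {} \<and> s \<subseteq> band xs k) \<and> c\<^sup>2 / 2 < ssq G (xs k)" for k
  proof -
    have "\<exists>v\<in>jt_sums (xs k). c\<^sup>2 / 2 < v"
      using less_cSup_iff[OF jt_sums_ne xb[rule_format], of "c\<^sup>2 / 2" k] normge[of k] by simp
    then obtain v where "v \<in> jt_sums (xs k)" "c\<^sup>2 / 2 < v" by (elim bexE)
    then obtain F where F: "admissible_family F" "c\<^sup>2 / 2 < ssq F (xs k)" using jt_sums_cases by blast
    let ?G = "(\<lambda>s. s \<inter> band xs k) ` F - {{}}"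
    have tr: "admissible_family ?G \<and> (\<forall>s\<in>?G. s \<noteq> {} \<and> s \<subseteq> band xs k)
        \<and> ssq ?G (xs k) = (\<Sum>s\<in>F. (sig (s \<inter> band xs k) (xs k))\<^sup>2)"
      by (rule trim[where B="band xs k" and x="xs k", OF F(1) segment_bandxs])
    have "(\<Sum>s\<in>F. (sig (s \<inter> band xs k) (xs k))\<^sup>2) = ssq F (xs k)"
      unfolding ssq_def
    proof (rule sum.cong[OF refl])
      fix s assume "s \<in> F"
      then have "finite s" using F(1) unfolding admissible_family_def by blast
      then show "(sig (s \<inter> band xs k) (xs k))\<^sup>2 = (sig s (xs k))\<^sup>2"
        using sig_restrict[of s "xs k" "band xs k"] LB1[OF lb] by simp
    qed
    then show ?thesis using tr F(2) by (intro exI[of _ ?G]) auto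
  qed
  then obtain G where G: "\<And>k. admissible_family (G k) \<and> (\<forall>s\<in>G k. s \<noteq> {} \<and> s \<subseteq> band xs k)
      \<and> c\<^sup>2 / 2 < ssq (G k) (xs k)"
    by metis
  have G': "\<And>k. admissible_family (G k) \<and> (\<forall>s\<in>G k. s \<noteq> {} \<and> s \<subseteq> band xs k)"
    using G by blast

  define A where "A k = ssq (G k) (xs k)" for k
  have Apos: "c\<^sup>2 / 2 < A k" for k using G unfolding A_def by blast
  have c2: "0 < c\<^sup>2 / 2" using c0 by simp
  have Apos': "0 < A k" for k using Apos[of k] c2 by linarith
  define gf where "gf k x = (\<Sum>s\<in>G k. (sig s (xs k) / A k) * sig s x)" for k x
  define K where "K = 2 / c\<^sup>2"
  have K0: "0 \<le> K" unfolding K_def by simp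

  have gsq: "(gf k x)\<^sup>2 \<le> K * ssq (G k) x" for k x
  proof -
    have "(gf k x)\<^sup>2 \<le> (\<Sum>s\<in>G k. (sig s (xs k) / A k)\<^sup>2) * (\<Sum>s\<in>G k. (sig s x)\<^sup>2)"
      unfolding gf_def by (rule Cauchy_Schwarz_ineq_sum)
    also have "(\<Sum>s\<in>G k. (sig s (xs k) / A k)\<^sup>2) = 1 / A k"
    proof -
      have "(\<Sum>s\<in>G k. (sig s (xs k) / A k)\<^sup>2) = A k / (A k)\<^sup>2"
        unfolding power_divide sum_divide_distrib[symmetric] by (simp add: A_def ssq_def)
      then show ?thesis using Apos'[of k] by (simp add: power2_eq_square)
    qed
    also have "1 / A k * (\<Sum>s\<in>G k. (sig s x)\<^sup>2) \<le> K * ssq (G k) x"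
    proof -
      have "1 / A k \<le> K" unfolding K_def using Apos[of k] Apos'[of k] c0
        by (simp add: field_simps)
      then show ?thesis using ssq_nonneg[of "G k" x] unfolding ssq_def
        by (intro mult_right_mono) (auto simp: sum_nonneg)
    qed
    finally show ?thesis .
  qed

  have gsum: "(\<Sum>k<N. (gf k x)\<^sup>2) \<le> K * Sup (jt_sums x)" if bx: "bdd x" for x N
  proof -
    have "(\<Sum>k<N. (gf k x)\<^sup>2) \<le> (\<Sum>k<N. K * ssq (G k) x)" by (intro sum_mono gsq)
    also have "\<dots> = K * ssq (\<Union>k<N. G k) x"
      using union_fam[OF lb G', of N x] by (simp add: sum_distrib_left)
    also have "\<dots> \<le> K * Sup (jt_sums x)"
    proof (rule mult_left_mono[OF _ K0])
      have "admissible_family (\<Union>k<N. G k)" using union_fam[OF lb G', of N x] by (rule conjunct1)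
      then show "ssq (\<Union>k<N. G k) x \<le> Sup (jt_sums x)" using bx by (rule ssq_le_S)
    qed
    finally show ?thesis .
  qed

  have summ: "summable (\<lambda>k. (gf k x)\<^sup>2)" if bx: "bdd x" for x
  proof (rule bounded_imp_summable)
    show "0 \<le> (gf k x)\<^sup>2" for k by simp
    show "(\<Sum>k\<le>n. (gf k x)\<^sup>2) \<le> K * Sup (jt_sums x)" for n
    proof -
      have "(\<Sum>k<Suc n. (gf k x)\<^sup>2) \<le> K * Sup (jt_sums x)" by (rule gsum[OF bx])
      then show ?thesis by (simp only: lessThan_Suc_atMost)
    qed
  qed

  have gf_lin: "gf k (\<lambda>t. a * x t + b * y t) = a * gf k x + b * gf k y" for k a b x y
    unfolding gf_def sig_add sig_mult
    by (simp add: algebra_simps sum.distrib sum_distrib_left)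

  have gf_span: "gf k (\<lambda>t. \<Sum>j<n. a j * xs j t) = (if k < n then a k else 0)" for k n a
  proof -
    have pt: "(\<Sum>j<n. a j * xs j t) = (if k < n then a k * xs k t else 0)" if "t \<in> band xs k" for t
    proof -
      have "(\<Sum>j<n. a j * xs j t) = (\<Sum>j<n. if j = k then a k * xs k t else 0)"
        by (rule sum.cong) (use LB3[OF lb that] in auto)
      then show ?thesis by simp
    qed
    have sg: "sig s (\<lambda>t. \<Sum>j<n. a j * xs j t) = (if k < n then a k * sig s (xs k) else 0)"
      if "s \<in> G k" for s
    proof -
      have "s \<subseteq> band xs k" using G' that by blast
      then have "sig s (\<lambda>t. \<Sum>j<n. a j * xs j t) = sig s (\<lambda>t. if k < n then a k * xs k t else 0)"
        unfolding sig_def using pt by (intro sum.cong) auto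
      then show ?thesis by (simp add: sig_def sum_distrib_left)
    qed
    have "gf k (\<lambda>t. \<Sum>j<n. a j * xs j t) = (\<Sum>s\<in>G k. (sig s (xs k) / A k) * (if k < n then a k * sig s (xs k) else 0))"
      unfolding gf_def using sg by (intro sum.cong) auto
    also have "\<dots> = (if k < n then a k * (A k / A k) else 0)"
    proof (cases "k < n")
      case True
      have "(\<Sum>s\<in>G k. (sig s (xs k) / A k) * (a k * sig s (xs k))) = a k * ((\<Sum>s\<in>G k. (sig s (xs k))\<^sup>2) / A k)"
        by (simp add: sum_distrib_left sum_divide_distrib power2_eq_square algebra_simps)
      then show ?thesis using True by (simp add: A_def ssq_def)
    next
      case False
      then show ?thesis by simp
    qed
    also have "\<dots> = (if k < n then a k else 0)" using Apos'[of k] by simp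
    finally show ?thesis .
  qed

  define P where "P x = (\<lambda>t. \<Sum>k<Suc t. gf k x * xs k t)" for x
  have ext: "(\<Sum>k<Suc t. b k * xs k t) = (\<Sum>k<N. b k * xs k t)" if "t < N" for t N and b :: "nat \<Rightarrow> real"
  proof (rule sum.mono_neutral_left)
    show "\<forall>i\<in>{..<N} - {..<Suc t}. b i * xs i t = 0"
      using LB4[OF lb] by (metis DiffE lessThan_iff less_Suc_eq_le mult_eq_0_iff)
  qed (use that in auto)

  define T where "T x n = suminf (\<lambda>k. (gf k x)\<^sup>2) - (\<Sum>k<n. (gf k x)\<^sup>2)" for x n
  have T0: "0 \<le> T x n" if "bdd x" for x n
    unfolding T_def using sum_le_suminf[OF summ[OF that], of "{..<n}"] by simp
  have Tlim: "(\<lambda>n. T x n) \<longlonglongrightarrow> 0" if "bdd x" for x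
  proof -
    have "(\<lambda>n. T x n) \<longlonglongrightarrow> suminf (\<lambda>k. (gf k x)\<^sup>2) - suminf (\<lambda>k. (gf k x)\<^sup>2)"
      unfolding T_def by (intro tendsto_diff tendsto_const summable_LIMSEQ summ that)
    then show ?thesis by simp
  qed

  have tail: "ssq F (\<lambda>t. P x t - (\<Sum>k<n. gf k x * xs k t)) \<le> C\<^sup>2 * T x n"
    if bx: "bdd x" and F: "admissible_family F" for x n F
  proof -
    obtain N0 where N0: "\<forall>s\<in>F. \<forall>t\<in>s. t < N0" using fam_bounded[OF F] by blast
    define N where "N = max N0 n"
    let ?b = "\<lambda>k. if n \<le> k then gf k x else 0"
    have "ssq F (\<lambda>t. P x t - (\<Sum>k<n. gf k x * xs k t)) = ssq F (\<lambda>t. \<Sum>k<N. ?b k * xs k t)"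
    proof (rule ssq_cong)
      fix s t assume "s \<in> F" "t \<in> s"
      then have "t < N" using N0 unfolding N_def by fastforce
      then have "P x t = (\<Sum>k<N. gf k x * xs k t)" unfolding P_def by (rule ext)
      then have "P x t - (\<Sum>k<n. gf k x * xs k t) = (\<Sum>k<N. if n \<le> k then gf k x * xs k t else 0)"
        using sum_tail_if[of n N "\<lambda>k. gf k x * xs k t"] unfolding N_def by simp
      also have "\<dots> = (\<Sum>k<N. ?b k * xs k t)" by (intro sum.cong) auto
      finally show "P x t - (\<Sum>k<n. gf k x * xs k t) = (\<Sum>k<N. ?b k * xs k t)" .
    qed
    also have "\<dots> \<le> C\<^sup>2 * (\<Sum>k<N. (?b k)\<^sup>2)" by (rule UP[OF F])
    also have "(\<Sum>k<N. (?b k)\<^sup>2) = (\<Sum>k<N. if n \<le> k then (gf k x)\<^sup>2 else 0)"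
      by (intro sum.cong) auto
    also have "\<dots> = (\<Sum>k<N. (gf k x)\<^sup>2) - (\<Sum>k<n. (gf k x)\<^sup>2)"
      using sum_tail_if[of n N "\<lambda>k. (gf k x)\<^sup>2"] unfolding N_def by simp
    also have "\<dots> \<le> T x n"
      unfolding T_def using sum_le_suminf[OF summ[OF bx], of "{..<N}"] by simp
    finally show ?thesis using C0 by simp
  qed

  have Pbound: "ssq F (P x) \<le> C\<^sup>2 * (K * Sup (jt_sums x))"
    if bx: "bdd x" and F: "admissible_family F" for x F
  proof -
    have "ssq F (P x) \<le> C\<^sup>2 * T x 0" using tail[OF bx F, of 0] by simp
    also have "T x 0 \<le> K * Sup (jt_sums x)" unfolding T_def
      using suminf_le_const[OF summ[OF bx]] gsum[OF bx] by simp
    finally show ?thesis using C0 by simp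
  qed

  define M where "M = sqrt (C\<^sup>2 * K)"
  have Pnorm: "bdd (P x) \<and> jt_norm (P x) \<le> M * jt_norm x" if bx: "bdd x" for x
  proof -
    have "bdd (P x) \<and> jt_norm (P x) \<le> sqrt (C\<^sup>2 * (K * Sup (jt_sums x)))"
      by (rule bound_norm) (erule Pbound[OF bx])
    then show ?thesis unfolding M_def jt_norm_def by (simp add: real_sqrt_mult)
  qed

  have Plin: "P (\<lambda>t. a * x t + b * y t) = (\<lambda>t. a * P x t + b * P y t)" for a b x y
    unfolding P_def gf_lin by (simp add: algebra_simps sum.distrib sum_distrib_left)

  have Pspan: "P (\<lambda>t. \<Sum>j<n. a j * xs j t) = (\<lambda>t. \<Sum>j<n. a j * xs j t)" for n a
  proof
    fix t
    define N where "N = max (Suc t) n"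
    have "P (\<lambda>t. \<Sum>j<n. a j * xs j t) t = (\<Sum>k<N. (if k < n then a k else 0) * xs k t)"
      unfolding P_def gf_span N_def by (rule ext) simp
    also have "\<dots> = (\<Sum>k\<in>{k\<in>{..<N}. k < n}. a k * xs k t)"
      by (subst sum.inter_filter) (auto intro: sum.cong)
    also have "{k\<in>{..<N}. k < n} = {..<n}" unfolding N_def by auto
    finally show "P (\<lambda>t. \<Sum>j<n. a j * xs j t) t = (\<Sum>j<n. a j * xs j t)" .
  qed

  show ?thesis
    unfolding complemented_in_JT_def
  proof (intro exI[of _ P] exI[of _ M] conjI ballI allI)
    fix x assume xJT: "x \<in> JT"
    then have bx: "bdd x" unfolding JT_def by auto
    have bnd: "\<bar>P x t - (\<Sum>k<n. gf k x * xs k t)\<bar> \<le> sqrt (C\<^sup>2 * T x n)" for t n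
      by (rule abs_le_bound) (erule tail[OF bx])
    have sT: "(\<lambda>n. sqrt (C\<^sup>2 * T x n)) \<longlonglongrightarrow> 0"
      using tendsto_real_sqrt[OF tendsto_mult_right_zero[OF Tlim[OF bx], of "C\<^sup>2"]] by simp
    have Px0: "P x \<longlonglongrightarrow> 0"
    proof (rule LIMSEQ_I)
      fix r :: real assume r: "0 < r"
      obtain n where n: "sqrt (C\<^sup>2 * T x n) < r / 2"
        using order_tendstoD(2)[OF sT, of "r/2"] r eventually_sequentially by auto
      have "(\<lambda>t. \<Sum>k<n. gf k x * xs k t) \<longlonglongrightarrow> 0"
        by (rule tendsto_null_sum) (rule tendsto_mult_right_zero[OF x0])
      moreover have "0 < r / 2" using r by simp
      ultimately obtain no where no: "\<forall>t\<ge>no. norm ((\<Sum>k<n. gf k x * xs k t) - 0) < r / 2"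
        by (rule LIMSEQ_D[THEN exE])
      show "\<exists>no. \<forall>t\<ge>no. norm (P x t - 0) < r"
      proof (intro exI allI impI)
        fix t assume "no \<le> t"
        then have "\<bar>\<Sum>k<n. gf k x * xs k t\<bar> < r / 2" using no by auto
        then show "norm (P x t - 0) < r" using bnd[of t n] n by simp
      qed
    qed
    show "P x \<in> closed_span xs"
      unfolding closed_span_def
    proof (intro CollectI conjI allI impI)
      show "P x \<in> JT" unfolding JT_def using Px0 conjunct1[OF Pnorm[OF bx]] by simp
      fix e :: real assume e: "0 < e"
      obtain n where n: "sqrt (C\<^sup>2 * T x n) < e"
        using order_tendstoD(2)[OF sT, of e] e eventually_sequentially by auto
      have "jt_norm (\<lambda>t. P x t - (\<Sum>k<n. gf k x * xs k t)) \<le> sqrt (C\<^sup>2 * T x n)"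
        by (rule conjunct2[OF bound_norm]) (erule tail[OF bx])
      moreover have "(\<lambda>t. \<Sum>k<n. gf k x * xs k t) \<in> lin_span xs" unfolding lin_span_def
        by (rule CollectI, rule exI[of _ n], rule exI[of _ "\<lambda>k. gf k x"]) simp
      ultimately show "\<exists>z\<in>lin_span xs. jt_norm (\<lambda>t. P x t - z t) < e" using n
        by (intro bexI[of _ "\<lambda>t. \<Sum>k<n. gf k x * xs k t"]) simp_all
    qed
  next
    fix y assume yc: "y \<in> closed_span xs"
    then have yJT: "y \<in> JT" and yapp: "\<And>e. 0 < e \<Longrightarrow> \<exists>z\<in>lin_span xs. jt_norm (\<lambda>t. y t - z t) < e"
      unfolding closed_span_def by blast+
    have bdy: "bdd y" using yJT unfolding JT_def by auto
    have M0: "0 \<le> M" unfolding M_def using K0 by simp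
    have key: "\<bar>P y t - y t\<bar> < (M + 1) * e" if e: "0 < e" for t e
    proof -
      obtain z where z: "z \<in> lin_span xs" "jt_norm (\<lambda>t. y t - z t) < e" using yapp[OF e] by blast
      then obtain n a where za: "z = (\<lambda>t. \<Sum>k<n. a k * xs k t)" unfolding lin_span_def by blast
      define v where "v = (\<lambda>t. y t - z t)"
      have bz: "bdd z" unfolding za by (rule bdd_lin[OF xb])
      have bv: "bdd v" unfolding v_def by (rule bdd_diff[OF bdy bz])
      have yv: "y = (\<lambda>t. 1 * v t + 1 * z t)" unfolding v_def by simp
      have "P y t - y t = P v t - v t"
        using Plin[where a=1 and x=v and b=1 and y=z] Pspan[where n=n and a=a] unfolding yv[symmetric] za[symmetric]
        by (simp add: v_def)
      moreover have "\<bar>P v t\<bar> \<le> M * jt_norm v" using abs_le_norm[of "P v" t] Pnorm[OF bv] by simp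
      moreover have "\<bar>v t\<bar> \<le> jt_norm v" by (rule abs_le_norm[OF bv])
      moreover have "jt_norm v < e" using z(2) unfolding v_def .
      ultimately have "\<bar>P y t - y t\<bar> \<le> (M + 1) * jt_norm v" by (simp add: algebra_simps)
      also have "\<dots> < (M + 1) * e" using \<open>jt_norm v < e\<close> M0 by simp
      finally show ?thesis .
    qed
    show "P y = y"
    proof
      fix t
      show "P y t = y t"
      proof (rule ccontr)
        assume "P y t \<noteq> y t"
        then have d: "0 < \<bar>P y t - y t\<bar>" by simp
        have "\<bar>P y t - y t\<bar> < (M + 1) * (\<bar>P y t - y t\<bar> / (M + 1))"
          using key[of "\<bar>P y t - y t\<bar> / (M + 1)" t] d M0 by simp
        then show False using M0 by simp
      qed
    qed
  next
    fix x y a b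
    show "P (\<lambda>t. a * x t + b * y t) = (\<lambda>t. a * P x t + b * P y t)" by (rule Plin)
  next
    fix x assume "x \<in> JT"
    then have "bdd x" unfolding JT_def by auto
    then show "jt_norm (P x) \<le> M * jt_norm x" by (rule Pnorm[THEN conjunct2])
  qed
qed


end
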